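(* Let $n\ge 1$ have canonical prime factorization $n=p_1^{\alpha_1}p_2^{\alpha_2}\cdots p_r^{\alpha_r}$. Then $$S(n)\cong \bigotimes_{i=1}^r S(p_i^{\alpha_i}),\qquad U(n)\cong \bigotimes_{i=1}^r U(p_i^{\alpha_i}),$$ where $\otimes$ is the Kronecker product. Moreover $U(n)$ is a (real) selfadjoint unitary involution, i.e. $U(n)=U(n)^*$ and $U(n)^2=I$, and $S(n)^2=nI$.
   Context: For integers $n\ge1$ and $x$, the Ramanujan sum is $c_n(x)=\sum_{1\le j\le n,\ (j,n)=1} e^{2\pi i jx/n}$. $\phi$ is Euler's totient function and $\tau(n)$ the number of positive divisors of $n$. For any $N\ge 1$, list the positive divisors of $N$ in some order $d_1,\dots,d_{\tau(N)}$ and define the $\tau(N)\times\tau(N)$ matrices $S(N)$ and $U(N)$ by $[S(N)]_{i,j}=c_{d_i}(N/d_j)$ and $[U(N)]_{i,j}=\frac{1}{\sqrt{N}}\,c_{d_i}(N/d_j)\sqrt{\phi(d_j)/\phi(d_i)}$. Different orderings of the divisors give matrices that are similar via a permutation matrix. For square matrices, $A\cong B$ means $B=P^{-1}AP$ for some permutation matrix $P$. *)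

theory Defs
  imports "Jordan_Normal_Form.Schur_Decomposition" "HOL-Number_Theory.Number_Theory"
    "HOL-Combinatorics.Permutations"
begin

definition ramanujan_sum :: "nat \<Rightarrow> int \<Rightarrow> complex" where
  "ramanujan_sum n x = (\<Sum>j\<in>{j\<in>{1..n}. coprime j n}. cis (2 * pi * real j * real_of_int x / real n))"

definition divisors_list :: "nat \<Rightarrow> nat list" where
  "divisors_list N = sorted_list_of_set {d. d dvd N}"

definition num_divisors :: "nat \<Rightarrow> nat" where
  "num_divisors N = card {d. d dvd N}"

definition S_mat :: "nat \<Rightarrow> complex mat" where
  "S_mat N = mat (num_divisors N) (num_divisors N)
     (\<lambda>(i, j). ramanujan_sum (divisors_list N ! i) (int (N div (divisors_list N ! j))))"

definition U_mat :: "nat \<Rightarrow> complex mat" where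
  "U_mat N = mat (num_divisors N) (num_divisors N)
     (\<lambda>(i, j). complex_of_real (1 / sqrt (real N))
        * ramanujan_sum (divisors_list N ! i) (int (N div (divisors_list N ! j)))
        * complex_of_real (sqrt (real (totient (divisors_list N ! j)) / real (totient (divisors_list N ! i)))))"

definition kron :: "'a :: semiring_1 mat \<Rightarrow> 'a mat \<Rightarrow> 'a mat" where
  "kron A B = mat (dim_row A * dim_row B) (dim_col A * dim_col B)
     (\<lambda>(i, j). A $$ (i div dim_row B, j div dim_col B) * B $$ (i mod dim_row B, j mod dim_col B))"

definition kron_list :: "'a :: semiring_1 mat list \<Rightarrow> 'a mat" where
  "kron_list Ms = foldr kron Ms (1\<^sub>m 1)"

definition perm_mat :: "nat \<Rightarrow> (nat \<Rightarrow> nat) \<Rightarrow> 'a :: semiring_1 mat" where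
  "perm_mat n f = mat n n (\<lambda>(i, j). if i = f j then 1 else 0)"

definition perm_similar :: "'a :: semiring_1 mat \<Rightarrow> 'a mat \<Rightarrow> bool" where
  "perm_similar A B \<longleftrightarrow> (\<exists>n f Q. A \<in> carrier_mat n n \<and> f permutes {..<n} \<and>
      Q \<in> carrier_mat n n \<and> Q * perm_mat n f = 1\<^sub>m n \<and> perm_mat n f * Q = 1\<^sub>m n \<and>
      B = Q * A * perm_mat n f)"

definition prime_power_factors :: "nat \<Rightarrow> nat list" where
  "prime_power_factors n = map (\<lambda>p. p ^ multiplicity p n) (sorted_list_of_set (prime_factors n))"

end

theory Submission
  imports Defs
begin


definition ee :: "nat \<Rightarrow> int \<Rightarrow> complex" where
  "ee N t = cis (2 * pi * real_of_int t / real N)"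

lemma ee_add: "ee N (s + t) = ee N s * ee N t"
  by (simp add: ee_def cis_mult add_divide_distrib distrib_left)

lemma ee_mult_N: "N > 0 \<Longrightarrow> ee N (int N * k) = 1"
proof -
  assume "N > 0"
  then have "2 * pi * real_of_int (int N * k) / real N = 2 * pi * real_of_int k" by simp
  then show ?thesis unfolding ee_def by (simp add: cis_multiple_2pi)
qed

lemma ee_cong: assumes "N > 0" "s mod int N = t mod int N" shows "ee N s = ee N t"
proof -
  have "int N dvd s - t" using assms(2) by (simp add: mod_eq_dvd_iff)
  then obtain k where k: "s - t = int N * k" by blast
  then have "s = t + int N * k" by simp
  then have "ee N s = ee N t * ee N (int N * k)" by (simp add: ee_add)
  then show ?thesis using ee_mult_N[OF assms(1)] by simp
qed

lemma ee_scale: "p > 0 \<Longrightarrow> ee (p * M) (int p * s) = ee M s"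
  by (simp add: ee_def mult.assoc)

lemma ee_neg: "ee N (- t) = cnj (ee N t)"
  by (simp add: ee_def cis_cnj)

lemma ee_1: "ee 1 t = 1"
  using ee_mult_N[of 1 t] by simp

lemma ram_def2: "ramanujan_sum n x = (\<Sum>j\<in>totatives n. ee n (int j * x))"
  unfolding ramanujan_sum_def ee_def
  by (rule sum.cong) (auto simp: in_totatives_iff mult.assoc)

definition RR :: "nat \<Rightarrow> int \<Rightarrow> complex" where
  "RR N x = (if int N dvd x then of_nat N else 0)"

lemma geo_sum: assumes "N > 0" shows "(\<Sum>j<N. ee N (int j * x)) = RR N x"
proof (cases "int N dvd x")
  case True
  then obtain k where "x = int N * k" by blast
  then have "\<And>j. ee N (int j * x) = 1" using ee_mult_N[OF assms] by (metis mult.left_commute)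
  then show ?thesis using True by (simp add: RR_def)
next
  case False
  have pw: "\<And>j. ee N (int j * x) = ee N x ^ j"
  proof -
    fix j show "ee N (int j * x) = ee N x ^ j"
      by (induction j) (simp_all add: ee_def[of N 0] distrib_right ee_add)
  qed
  have ne: "ee N x \<noteq> 1"
  proof
    assume "ee N x = 1"
    then have "cis (2 * pi * real_of_int x / real N) = 1" by (simp add: ee_def)
    then have "cos (2 * pi * (real_of_int x / real N)) = 1"
      by (metis cis.sel(1) one_complex.sel(1) times_divide_eq_right)
    then obtain k :: int where k: "2 * pi * (real_of_int x / real N) = real_of_int k * 2 * pi"
      using cos_one_2pi_int by blast
    then have "2 * pi * (real_of_int x / real N - real_of_int k) = 0" by (simp add: algebra_simps)
    then have "real_of_int x / real N = real_of_int k" by simp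
    then have "real_of_int x = real_of_int (k * int N)" using assms by (simp add: field_simps)
    then have "x = k * int N" by linarith
    then show False using False by simp
  qed
  have "ee N x ^ N = 1" using ee_mult_N[OF assms, of x] pw[of N] by simp
  then show ?thesis using ne False by (simp add: pw geometric_sum RR_def)
qed

lemma shift_sum: assumes "N > 0" shows "(\<Sum>j\<in>{0<..N}. ee N (int j * x)) = (\<Sum>j<N. ee N (int j * x))"
proof -
  have a: "{0<..N} = insert N {0<..<N}" using assms by auto
  have b: "{..<N} = insert 0 {0<..<N}" using assms by auto
  have z: "ee N 0 = 1" by (simp add: ee_def)
  have "ee N (int N * x) = ee N (int 0 * x)" using ee_mult_N[OF assms] z by simp
  then show ?thesis unfolding a b by simp
qed

lemma ram_1: "ramanujan_sum 1 x = 1"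
  using ee_1[of x] by (simp add: ram_def2)

lemma ram_pp: assumes "prime p"
  shows "ramanujan_sum (p ^ Suc k) x = RR (p ^ Suc k) x - RR (p ^ k) x"
proof -
  have p0: "p > 0" using assms prime_gt_0_nat by blast
  have pn0: "p \<noteq> 0" using p0 by simp
  have sub: "(*) p ` {0<..p^k} \<subseteq> {0<..p ^ Suc k}" using p0 by auto
  have inj: "inj_on ((*) p) {0<..p^k}" using p0 by (auto simp: inj_on_def)
  have "ramanujan_sum (p ^ Suc k) x = (\<Sum>j\<in>{0<..p ^ Suc k}. ee (p ^ Suc k) (int j * x))
      - (\<Sum>j\<in>(*) p ` {0<..p^k}. ee (p ^ Suc k) (int j * x))"
    unfolding ram_def2 totatives_prime_power_Suc[OF assms]
    by (rule sum_diff) (use sub in auto)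
  also have "(\<Sum>j\<in>(*) p ` {0<..p^k}. ee (p ^ Suc k) (int j * x)) = (\<Sum>j\<in>{0<..p^k}. ee (p ^ k) (int j * x))"
    by (subst sum.reindex[OF inj]) (simp add: ee_def mult.commute mult.left_commute pn0)
  finally have e: "ramanujan_sum (p ^ Suc k) x = (\<Sum>j\<in>{0<..p ^ Suc k}. ee (p ^ Suc k) (int j * x))
      - (\<Sum>j\<in>{0<..p^k}. ee (p ^ k) (int j * x))" .
  have pos1: "p ^ Suc k > 0" "p ^ k > 0" using p0 by simp_all
  show ?thesis unfolding e shift_sum[OF pos1(1)] shift_sum[OF pos1(2)] geo_sum[OF pos1(1)] geo_sum[OF pos1(2)] ..
qed



lemma ram_Suc0 [simp]: "ramanujan_sum (Suc 0) x = 1"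
  using ram_1 by simp

lemma ram_mult_coprime:
  assumes a0: "a > 0" and cop: "coprime y (int a)"
  shows "ramanujan_sum a (x * y) = ramanujan_sum a x"
proof (cases "a = 1")
  case True then show ?thesis by (simp add: ram_1)
next
  case False
  then have a1: "a > 1" using a0 by simp
  define f where "f j = nat ((int j * y) mod int a)" for j
  let ?T = "totatives a"
  have less: "j \<in> ?T \<Longrightarrow> j < a" for j using totatives_less a1 by blast
  have fint: "int (f j) = (int j * y) mod int a" for j unfolding f_def using a0 by simp
  have into: "f j \<in> ?T" if "j \<in> ?T" for j
  proof -
    have cj: "coprime (int j) (int a)" using that by (simp add: in_totatives_iff coprime_int_iff)
    have c: "coprime (int j * y) (int a)" using cj cop by simp
    then have c2: "coprime ((int j * y) mod int a) (int a)"
      using a0 by simp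
    have "\<not> int a dvd int j * y"
    proof
      assume "int a dvd int j * y"
      then have "is_unit (int a)" using c by (meson coprime_common_divisor dvd_refl)
      then show False using a1 by simp
    qed
    then have "(int j * y) mod int a \<noteq> 0" by (simp add: dvd_eq_mod_eq_0)
    moreover have "(int j * y) mod int a \<ge> 0" "(int j * y) mod int a < int a" using a0 by simp_all
    ultimately have "int (f j) > 0" "int (f j) \<le> int a" using fint[of j] by linarith+
    then have "f j > 0" "f j \<le> a" by simp_all
    moreover have "coprime (int (f j)) (int a)" using c2 fint by simp
    then have "coprime (f j) a" by (simp add: coprime_int_iff)
    ultimately show ?thesis by (simp add: in_totatives_iff)
  qed
  have inj: "inj_on f ?T"
  proof
    fix j j' assume j: "j \<in> ?T" "j' \<in> ?T" "f j = f j'"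
    then have "int (f j) = int (f j')" by simp
    then have "(int j * y) mod int a = (int j' * y) mod int a" by (simp only: fint)
    then have "int a dvd (int j - int j') * y" by (simp add: mod_eq_dvd_iff algebra_simps)
    then have "int a dvd (int j - int j')" using cop
      by (metis coprime_commute coprime_dvd_mult_left_iff)
    then have "int j mod int a = int j' mod int a" by (simp add: mod_eq_dvd_iff)
    then show "j = j'" using less j(1,2) by simp
  qed
  have img: "f ` ?T = ?T" using endo_inj_surj[of ?T f] into inj by auto
  have "ramanujan_sum a x = (\<Sum>j\<in>f ` ?T. ee a (int j * x))" unfolding ram_def2 img ..
  also have "\<dots> = (\<Sum>j\<in>?T. ee a (int (f j) * x))" by (rule sum.reindex[OF inj, unfolded comp_def])
  also have "\<dots> = (\<Sum>j\<in>?T. ee a (int j * (x * y)))"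
  proof (rule sum.cong[OF refl])
    fix j show "ee a (int (f j) * x) = ee a (int j * (x * y))"
      by (rule ee_cong[OF a0]) (simp add: fint mod_mult_left_eq mod_mult_right_eq mult_ac)
  qed
  finally show ?thesis by (simp add: ram_def2)
qed

lemma ram_real: "a > 0 \<Longrightarrow> ramanujan_sum a x \<in> \<real>"
proof -
  assume a0: "a > 0"
  have "cnj (ramanujan_sum a x) = ramanujan_sum a (x * (-1))"
    by (simp add: ram_def2 ee_neg)
  also have "\<dots> = ramanujan_sum a x" by (rule ram_mult_coprime[OF a0]) simp
  finally show ?thesis by (simp add: Reals_cnj_iff)
qed

lemma ram_mult:
  assumes cop: "coprime a b" and a0: "a > 0" and b0: "b > 0"
  shows "ramanujan_sum (a * b) x = ramanujan_sum a x * ramanujan_sum b x"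
proof (cases "a = 1 \<or> b = 1")
  case True then show ?thesis by (auto simp: ram_1)
next
  case False
  then have a1: "a > 1" and b1: "b > 1" using a0 b0 by auto
  have "coprime (int b) (int a)" using cop by (simp add: coprime_int_iff coprime_commute)
  then have g: "gcd (int b) (int a) = 1" using coprime_iff_gcd_eq_1 by blast
  define u where "u = fst (bezout_coefficients (int b) (int a))"
  define v where "v = snd (bezout_coefficients (int b) (int a))"
  have uv: "u * int b + v * int a = 1"
    using bezout_coefficients_fst_snd[of "int b" "int a"] g unfolding u_def v_def by simp
  have cu: "coprime u (int a)"
  proof (rule coprimeI)
    fix c assume "c dvd u" "c dvd int a"
    then have "c dvd u * int b + v * int a" by simp
    then show "is_unit c" using uv by simp
  qed
  have cv: "coprime v (int b)"
  proof (rule coprimeI)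
    fix c assume "c dvd v" "c dvd int b"
    then have "c dvd u * int b + v * int a" by simp
    then show "is_unit c" using uv by simp
  qed
  define h where "h = (\<lambda>(j1::nat, j2::nat). ee a (int j1 * (x * u)) * ee b (int j2 * (x * v)))"
  have trm: "ee (a * b) (int j * x) = h (j mod a, j mod b)" for j
  proof -
    have "int j * x = int b * (int j * x * u) + int a * (int j * x * v)"
    proof -
      have "int b * (int j * x * u) + int a * (int j * x * v) = int j * x * (u * int b + v * int a)"
        by (simp add: algebra_simps)
      then show ?thesis using uv by simp
    qed
    then have "ee (a * b) (int j * x) = ee (a * b) (int b * (int j * x * u) + int a * (int j * x * v))"
      by (rule arg_cong)
    also have "\<dots> = ee (a * b) (int b * (int j * x * u)) * ee (a * b) (int a * (int j * x * v))"
      by (rule ee_add)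
    also have "ee (a * b) (int b * (int j * x * u)) = ee a (int j * x * u)"
      using ee_scale[OF b0, of a "int j * x * u"] by (simp add: mult.commute)
    also have "ee (a * b) (int a * (int j * x * v)) = ee b (int j * x * v)"
      using ee_scale[OF a0, of b "int j * x * v"] by simp
    also have "ee a (int j * x * u) = ee a (int (j mod a) * (x * u))"
      by (rule ee_cong[OF a0]) (simp add: int_ops(9) mod_mult_left_eq mult.assoc)
    also have "ee b (int j * x * v) = ee b (int (j mod b) * (x * v))"
      by (rule ee_cong[OF b0]) (simp add: int_ops(9) mod_mult_left_eq mult.assoc)
    finally show ?thesis by (simp add: h_def)
  qed
  have "ramanujan_sum (a * b) x = (\<Sum>j\<in>totatives (a*b). h (j mod a, j mod b))"
    unfolding ram_def2 using trm by simp
  also have "\<dots> = (\<Sum>p\<in>totatives a \<times> totatives b. h p)"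
    using sum.reindex_bij_betw[OF bij_betw_totatives[OF a1 b1 cop], of h] by simp
  also have "\<dots> = (\<Sum>j1\<in>totatives a. ee a (int j1 * (x * u))) * (\<Sum>j2\<in>totatives b. ee b (int j2 * (x * v)))"
    by (simp add: h_def sum_product sum.cartesian_product)
  also have "\<dots> = ramanujan_sum a (x * u) * ramanujan_sum b (x * v)" by (simp add: ram_def2)
  also have "\<dots> = ramanujan_sum a x * ramanujan_sum b x"
    using ram_mult_coprime[OF a0 cu] ram_mult_coprime[OF b0 cv] by simp
  finally show ?thesis .
qed

lemma cop_div: "coprime q m \<Longrightarrow> b2 dvd m \<Longrightarrow> a1 dvd q \<Longrightarrow> coprime (m div b2) (a1::nat)"
  by (smt (verit, best) coprime_imp_coprime dvd_imp_mult_div_cancel_left dvd_mult dvd_trans)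

lemma ram_entry_mult:
  assumes cop: "coprime q m" and q0: "q > 0" and m0: "m > 0"
    and d: "a1 dvd q" "b1 dvd q" "a2 dvd m" "b2 dvd m"
  shows "ramanujan_sum (a1 * a2) (int ((q * m) div (b1 * b2)))
       = ramanujan_sum a1 (int (q div b1)) * ramanujan_sum a2 (int (m div b2))"
proof -
  have a10: "a1 > 0" using d q0 by (metis dvd_0_left_iff gr0I)
  have a20: "a2 > 0" using d m0 by (metis dvd_0_left_iff gr0I)
  have eq: "(q * m) div (b1 * b2) = (q div b1) * (m div b2)"
    using d by (simp add: div_mult_div_if_dvd)
  have ca: "coprime a1 a2" using cop d coprime_divisors by blast
  have c1: "coprime (int (m div b2)) (int a1)"
    using cop_div[OF cop d(4) d(1)] by (simp add: coprime_int_iff)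
  have c2: "coprime (int (q div b1)) (int a2)"
    using cop_div[OF cop[THEN coprime_commute[THEN iffD1]] d(2) d(3)] by (simp add: coprime_int_iff)
  have "ramanujan_sum (a1 * a2) (int ((q * m) div (b1 * b2)))
      = ramanujan_sum a1 (int (q div b1) * int (m div b2)) * ramanujan_sum a2 (int (m div b2) * int (q div b1))"
    unfolding eq ram_mult[OF ca a10 a20] by (simp add: mult.commute)
  also have "\<dots> = ramanujan_sum a1 (int (q div b1)) * ramanujan_sum a2 (int (m div b2))"
    using ram_mult_coprime[OF a10 c1] ram_mult_coprime[OF a20 c2] by simp
  finally show ?thesis .
qed



lemma RR_pp: assumes "prime p" shows "RR (p ^ m) (int (p ^ t)) = (if m \<le> t then of_nat (p ^ m) else 0)"
proof -
  have p2: "2 \<le> p" using assms prime_ge_2_nat by blast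
  have "int (p ^ m) dvd int (p ^ t) \<longleftrightarrow> m \<le> t"
    using dvd_power_iff_le[OF p2] by (simp only: int_dvd_int_iff)
  then show ?thesis by (simp add: RR_def)
qed

lemma ram_tele: assumes "prime p" shows "(\<Sum>k\<le>m. ramanujan_sum (p ^ k) x) = RR (p ^ m) x"
proof (induction m)
  case 0 then show ?case by (simp add: RR_def)
next
  case (Suc m)
  then show ?case using ram_pp[OF assms, of m x] by simp
qed

lemma sum_if_le: "(m::nat) \<le> e \<Longrightarrow> (\<Sum>k\<le>e. (if k \<le> m then f k else 0)) = (\<Sum>k\<le>m. f k)"
proof -
  assume "m \<le> e"
  then have "{..m} = {k\<in>{..e}. k \<le> m}" by auto
  then have "(\<Sum>k\<le>m. f k) = (\<Sum>k\<in>{k\<in>{..e}. k \<le> m}. f k)" by simp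
  also have "\<dots> = (\<Sum>k\<le>e. (if k \<le> m then f k else 0))" by (rule sum.inter_filter) simp
  finally show ?thesis by simp
qed

lemma divs_pp: assumes "prime (p::nat)" shows "{d. d dvd p ^ e} = (\<lambda>k. p ^ k) ` {..e}"
  using divides_primepow_nat[OF assms] by auto

lemma inj_pp: assumes "prime (p::nat)" shows "inj_on (\<lambda>k. p ^ k) A"
proof -
  have "1 < p" using assms prime_gt_1_nat by blast
  then show ?thesis by (auto simp: inj_on_def power_inject_exp)
qed

lemma sum_divs_pp: assumes "prime (p::nat)"
  shows "(\<Sum>d | d dvd p ^ e. f d) = (\<Sum>k\<le>e. f (p ^ k))"
  unfolding divs_pp[OF assms] by (simp add: sum.reindex[OF inj_pp[OF assms]])

lemma pow_div: assumes "prime p" "k \<le> e" shows "p ^ e div p ^ k = p ^ (e - k)"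
  using power_diff[of p k e] assms prime_gt_0_nat by simp

lemma ram_ppv:
  assumes "prime p"
  shows "ramanujan_sum (p ^ Suc i) (int (p ^ t)) =
     (if Suc i \<le> t then of_nat (p ^ Suc i) else 0) - (if i \<le> t then of_nat (p ^ i) else 0)"
  by (simp only: ram_pp[OF assms] RR_pp[OF assms])

lemma P1_pp:
  assumes p: "prime p" and ij: "i \<le> e" "j \<le> e"
  shows "(\<Sum>d | d dvd p ^ e. ramanujan_sum (p ^ i) (int (p ^ e div d)) * ramanujan_sum d (int (p ^ e div p ^ j)))
       = (if p ^ i = p ^ j then of_nat (p ^ e) else 0)"
proof -
  define P where "P k = (of_nat (p ^ k) :: complex)" for k
  have PM: "P a * P b = P (a + b)" for a b by (simp add: P_def power_add)
  have inj: "p ^ i = p ^ j \<longleftrightarrow> i = j" using inj_pp[OF p, of UNIV] by (auto dest: injD)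
  define y where "y = int (p ^ (e - j))"
  define c where "c k = ramanujan_sum (p ^ k) y" for k
  have "(\<Sum>d | d dvd p ^ e. ramanujan_sum (p ^ i) (int (p ^ e div d)) * ramanujan_sum d (int (p ^ e div p ^ j)))
      = (\<Sum>k\<le>e. ramanujan_sum (p ^ i) (int (p ^ (e - k))) * c k)"
    unfolding sum_divs_pp[OF p] y_def c_def by (rule sum.cong) (auto simp: pow_div[OF p] ij)
  also have "\<dots> = (if i = j then P e else 0)"
  proof (cases i)
    case 0
    have "(\<Sum>k\<le>e. ramanujan_sum (p ^ i) (int (p ^ (e - k))) * c k)
        = (\<Sum>k\<le>e. ramanujan_sum (p ^ k) y)" using 0 by (simp add: c_def)
    also have "\<dots> = RR (p ^ e) y" by (rule ram_tele[OF p])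
    also have "\<dots> = (if i = j then P e else 0)"
      unfolding y_def RR_pp[OF p] P_def using 0 ij by auto
    finally show ?thesis .
  next
    case (Suc i')
    have "(\<Sum>k\<le>e. ramanujan_sum (p ^ i) (int (p ^ (e - k))) * c k)
       = (\<Sum>k\<le>e. (if k \<le> e - i then P i * c k else 0) - (if k \<le> e - i' then P i' * c k else 0))"
    proof (rule sum.cong[OF refl])
      fix k assume k: "k \<in> {..e}"
      have r: "ramanujan_sum (p ^ i) (int (p ^ (e - k))) = (if Suc i' \<le> e - k then P (Suc i') else 0) - (if i' \<le> e - k then P i' else 0)"
        unfolding Suc P_def by (rule ram_ppv[OF p])
      show "ramanujan_sum (p ^ i) (int (p ^ (e - k))) * c k = (if k \<le> e - i then P i * c k else 0) - (if k \<le> e - i' then P i' * c k else 0)"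
        unfolding r using Suc ij k by (auto simp: algebra_simps)
    qed
    also have "\<dots> = (\<Sum>k\<le>e. (if k \<le> e - i then P i * c k else 0)) - (\<Sum>k\<le>e. (if k \<le> e - i' then P i' * c k else 0))"
      by (rule sum_subtractf)
    also have "(\<Sum>k\<le>e. (if k \<le> e - i then P i * c k else 0)) = P i * RR (p ^ (e - i)) y"
      by (simp add: sum_if_le sum_distrib_left[symmetric] ram_tele[OF p] c_def)
    also have "(\<Sum>k\<le>e. (if k \<le> e - i' then P i' * c k else 0)) = P i' * RR (p ^ (e - i')) y"
      by (simp add: sum_if_le sum_distrib_left[symmetric] ram_tele[OF p] c_def)
    also have "P i * RR (p ^ (e - i)) y - P i' * RR (p ^ (e - i')) y = (if i = j then P e else 0)"
    proof -
      have e1: "i + (e - i) = e" using ij by simp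
      have e2: "i' + (e - i') = e" using ij Suc by simp
      have "P i * RR (p ^ (e - i)) y - P i' * RR (p ^ (e - i')) y
          = (if j \<le> i then P e else 0) - (if j \<le> i' then P e else 0)"
        unfolding y_def RR_pp[OF p] P_def[symmetric] using ij Suc by (auto simp: PM e1 e2)
      then show ?thesis using Suc by auto
    qed
    finally show ?thesis .
  qed
  finally show ?thesis using inj by (simp add: P_def)
qed

lemma P2_pp:
  assumes p: "prime p" and ij: "i \<le> e" "j \<le> e"
  shows "ramanujan_sum (p ^ i) (int (p ^ e div p ^ j)) * of_nat (totient (p ^ j))
       = ramanujan_sum (p ^ j) (int (p ^ e div p ^ i)) * of_nat (totient (p ^ i))"
proof -
  define P where "P k = (of_nat (p ^ k) :: complex)" for k
  have PM: "P a * P b = P (a + b)" for a b by (simp add: P_def power_add)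
  have p1: "p \<ge> 1" using p prime_gt_0_nat by (simp add: Suc_leI)
  have totS: "of_nat (totient (p ^ Suc k)) = P (Suc k) - P k" for k
  proof -
    have "totient (p ^ Suc k) = p ^ k * (p - 1)" using totient_prime_power_Suc[OF p] .
    also have "\<dots> = p ^ Suc k - p ^ k" by (simp add: diff_mult_distrib2 mult.commute)
    finally have "totient (p ^ Suc k) = p ^ Suc k - p ^ k" .
    moreover have "p ^ k \<le> p ^ Suc k" using p1 by simp
    ultimately show ?thesis unfolding P_def by (simp add: of_nat_diff)
  qed
  have V: "ramanujan_sum (p ^ Suc a) (int (p ^ t)) = (if Suc a \<le> t then P (Suc a) else 0) - (if a \<le> t then P a else 0)" for a t
    unfolding P_def by (rule ram_ppv[OF p])
  have V0: "ramanujan_sum (p ^ 0) x = 1" for x by simp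
  have T0: "of_nat (totient (p ^ 0)) = (1::complex)" by simp
  show ?thesis unfolding pow_div[OF p ij(1)] pow_div[OF p ij(2)]
  proof (cases i)
    case 0
    then show "ramanujan_sum (p ^ i) (int (p ^ (e - j))) * of_nat (totient (p ^ j)) =
      ramanujan_sum (p ^ j) (int (p ^ (e - i))) * of_nat (totient (p ^ i))"
    proof (cases j)
      case 0 then show ?thesis using \<open>i = 0\<close> by simp
    next
      case (Suc j')
      show ?thesis unfolding \<open>i = 0\<close> Suc V V0 T0 totS using Suc ij by auto
    qed
  next
    case (Suc i')
    then show "ramanujan_sum (p ^ i) (int (p ^ (e - j))) * of_nat (totient (p ^ j)) =
      ramanujan_sum (p ^ j) (int (p ^ (e - i))) * of_nat (totient (p ^ i))"
    proof (cases j)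
      case 0 show ?thesis unfolding \<open>i = Suc i'\<close> 0 V V0 T0 totS using Suc ij by auto
    next
      case (Suc j')
      have c1: "Suc i' \<le> e - Suc j' \<longleftrightarrow> Suc j' \<le> e - Suc i'" using ij \<open>i = Suc i'\<close> Suc by auto
      have c2: "i' \<le> e - Suc j' \<longleftrightarrow> j' \<le> e - Suc i'" using ij \<open>i = Suc i'\<close> Suc by auto
      have c3: "Suc i' \<le> e - j' \<longleftrightarrow> Suc j' \<le> e - i'" using ij \<open>i = Suc i'\<close> Suc by auto
      have c4: "i' \<le> e - j' \<longleftrightarrow> j' \<le> e - i'" using ij \<open>i = Suc i'\<close> Suc by auto
      show ?thesis unfolding \<open>i = Suc i'\<close> Suc V totS
        by (simp add: c1 c2 c3 c4 algebra_simps PM)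
    qed
  qed
qed



lemma dvd_coprime_split: "coprime (q::nat) m \<Longrightarrow> d dvd q * m \<Longrightarrow> d = gcd d q * gcd d m"
  by (smt (verit, del_insts) coprime_divisors gcd.commute
    gcd.top_left_normalize gcd_0_left_nat gcd_dvd2 gcd_lcm_distrib
    gcd_nat.absorb_iff2 lcm_coprime)

lemma gcd_prod: "coprime d2 (q::nat) \<Longrightarrow> d1 dvd q \<Longrightarrow> gcd (d1 * d2) q = d1"
  by (metis coprime_commute gcd_mult_left_right_cancel gcd_nat.absorb_iff1)

lemma divs_bij:
  assumes cop: "coprime (q::nat) m"
  shows "bij_betw (\<lambda>(d1, d2). d1 * d2) ({d. d dvd q} \<times> {d. d dvd m}) {d. d dvd q * m}"
  unfolding bij_betw_def
proof
  show "inj_on (\<lambda>(d1, d2). d1 * d2) ({d. d dvd q} \<times> {d. d dvd m})"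
  proof (rule inj_onI, clarify)
    fix d1 d2 d1' d2' assume h: "d1 dvd q" "d2 dvd m" "d1' dvd q" "d2' dvd m" "d1 * d2 = d1' * d2'"
    have c2: "coprime d2 q" "coprime d2' q"
      using coprime_divisors[OF dvd_refl[of q] h(2) cop] coprime_divisors[OF dvd_refl[of q] h(4) cop]
      by (simp_all add: coprime_commute)
    have c1: "coprime d1 m" "coprime d1' m"
      using coprime_divisors[OF h(1) dvd_refl[of m] cop] coprime_divisors[OF h(3) dvd_refl[of m] cop]
      by simp_all
    have "d1 = gcd (d1 * d2) q" using gcd_prod[OF c2(1) h(1)] by simp
    also have "\<dots> = d1'" using gcd_prod[OF c2(2) h(3)] h(5) by simp
    finally have "d1 = d1'" .
    moreover have "d2 = gcd (d1 * d2) m" using gcd_prod[OF c1(1) h(2)] by (simp add: mult.commute)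
    moreover have "gcd (d1' * d2') m = d2'" using gcd_prod[OF c1(2) h(4)] by (simp add: mult.commute)
    ultimately show "d1 = d1' \<and> d2 = d2'" using h(5) by (cases "d1' = 0") auto
  qed
next
  show "(\<lambda>(d1, d2). d1 * d2) ` ({d. d dvd q} \<times> {d. d dvd m}) = {d. d dvd q * m}"
  proof safe
    fix d1 d2 assume "d1 dvd q" "d2 dvd m" then show "d1 * d2 dvd q * m" by (rule mult_dvd_mono)
  next
    fix d assume "d dvd q * m"
    then have "d = gcd d q * gcd d m" using dvd_coprime_split[OF cop] by blast
    moreover have "(gcd d q, gcd d m) \<in> {d. d dvd q} \<times> {d. d dvd m}" by simp
    ultimately show "d \<in> (\<lambda>(d1, d2). d1 * d2) ` ({d. d dvd q} \<times> {d. d dvd m})"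
      by (metis (no_types, lifting) case_prod_conv image_eqI)
  qed
qed

lemma sum_divs_mult:
  assumes cop: "coprime (q::nat) m" and q0: "q > 0" and m0: "m > 0"
  shows "(\<Sum>d | d dvd q * m. f d) = (\<Sum>d1 | d1 dvd q. \<Sum>d2 | d2 dvd m. f (d1 * d2))"
proof -
  have "(\<Sum>d | d dvd q * m. f d) = (\<Sum>x\<in>{d. d dvd q} \<times> {d. d dvd m}. f (case x of (d1, d2) \<Rightarrow> d1 * d2))"
    using sum.reindex_bij_betw[OF divs_bij[OF cop], of f] by simp
  also have "\<dots> = (\<Sum>d1 | d1 dvd q. \<Sum>d2 | d2 dvd m. f (d1 * d2))"
    by (subst sum.cartesian_product) (simp add: split_def)
  finally show ?thesis .
qed

lemma card_divs_mult:
  assumes cop: "coprime (q::nat) m" and q0: "q > 0" and m0: "m > 0"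
  shows "card {d. d dvd q * m} = card {d. d dvd q} * card {d. d dvd m}"
  using bij_betw_same_card[OF divs_bij[OF cop]] by (simp add: card_cartesian_product)

lemma coprime_pp_list:
  assumes "prime p" "p \<notin> set ps" "\<forall>r\<in>set ps. prime r"
  shows "coprime (p ^ a) (prod_list (map (\<lambda>r. r ^ e r) ps :: nat list))"
proof (rule prod_list_coprime_right)
  fix x assume "x \<in> set (map (\<lambda>r. r ^ e r) ps)"
  then obtain r where r: "r \<in> set ps" "x = r ^ e r" by auto
  then have "p \<noteq> r" using assms(2) by auto
  then have "coprime p r" using primes_coprime assms(1,3) r(1) by blast
  then show "coprime (p ^ a) x" using r by simp
qed

lemma prod_pp_pos: "\<forall>r\<in>set ps. prime r \<Longrightarrow> prod_list (map (\<lambda>r. r ^ e r) ps :: nat list) > 0"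
  by (induction ps) (auto simp: prime_gt_0_nat)

lemma mult_induct:
  fixes P :: "nat \<Rightarrow> nat \<Rightarrow> nat \<Rightarrow> bool"
  assumes "distinct ps" "\<forall>r\<in>set ps. prime r"
    and base: "\<And>p k a b. prime p \<Longrightarrow> a dvd p ^ k \<Longrightarrow> b dvd p ^ k \<Longrightarrow> P (p ^ k) a b"
    and one: "P 1 1 1"
    and step: "\<And>q m a1 a2 b1 b2. coprime q m \<Longrightarrow> q > 0 \<Longrightarrow> m > 0 \<Longrightarrow> a1 dvd q \<Longrightarrow> b1 dvd q \<Longrightarrow>
        a2 dvd m \<Longrightarrow> b2 dvd m \<Longrightarrow> P q a1 b1 \<Longrightarrow> P m a2 b2 \<Longrightarrow> P (q * m) (a1 * a2) (b1 * b2)"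
  shows "a dvd prod_list (map (\<lambda>r. r ^ e r) ps) \<Longrightarrow> b dvd prod_list (map (\<lambda>r. r ^ e r) ps)
     \<Longrightarrow> P (prod_list (map (\<lambda>r. r ^ e r) ps)) a b"
  using assms(1,2)
proof (induction ps arbitrary: a b)
  case Nil then show ?case using one by simp
next
  case (Cons p ps)
  define q where "q = p ^ e p"
  define m where "m = prod_list (map (\<lambda>r. r ^ e r) ps)"
  have pp: "prime p" using Cons by simp
  have cop: "coprime q m" unfolding q_def m_def using coprime_pp_list[of p ps] Cons by simp
  have q0: "q > 0" unfolding q_def using pp prime_gt_0_nat by simp
  have m0: "m > 0" unfolding m_def using prod_pp_pos Cons by simp
  have a: "a dvd q * m" and b: "b dvd q * m" using Cons by (simp_all add: q_def m_def)
  have ea: "a = gcd a q * gcd a m" using dvd_coprime_split[OF cop a] .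
  have eb: "b = gcd b q * gcd b m" using dvd_coprime_split[OF cop b] .
  have "P q (gcd a q) (gcd b q)" unfolding q_def using base[OF pp] by simp
  moreover have "P m (gcd a m) (gcd b m)" unfolding m_def using Cons by simp
  ultimately have "P (q * m) (gcd a q * gcd a m) (gcd b q * gcd b m)"
    using step[OF cop q0 m0] by simp
  then show ?case using ea eb by (simp add: q_def m_def)
qed



definition Gm :: "(nat \<Rightarrow> nat \<Rightarrow> nat \<Rightarrow> complex) \<Rightarrow> nat \<Rightarrow> complex mat" where
  "Gm F N = mat (num_divisors N) (num_divisors N) (\<lambda>(i, j). F N (divisors_list N ! i) (divisors_list N ! j))"

lemma dl_props:
  assumes "N > 0"
  shows "set (divisors_list N) = {d. d dvd N}" "distinct (divisors_list N)"
        "length (divisors_list N) = num_divisors N"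
proof -
  have fin: "finite {d. d dvd N}" using finite_divisors_nat assms by blast
  show "set (divisors_list N) = {d. d dvd N}" unfolding divisors_list_def using fin by simp
  show "distinct (divisors_list N)" unfolding divisors_list_def by simp
  show "length (divisors_list N) = num_divisors N" unfolding divisors_list_def num_divisors_def by simp
qed

lemma num_div_pos: "N > 0 \<Longrightarrow> num_divisors N > 0"
proof -
  assume "N > 0"
  then have "finite {d. d dvd N}" using finite_divisors_nat by blast
  moreover have "1 \<in> {d. d dvd N}" by simp
  ultimately show ?thesis unfolding num_divisors_def using card_gt_0_iff by blast
qed

lemma dl_bij: "N > 0 \<Longrightarrow> bij_betw ((!) (divisors_list N)) {..<num_divisors N} {d. d dvd N}"
  by (rule bij_betw_nth) (simp_all add: dl_props)

lemma dl_dvd: "N > 0 \<Longrightarrow> i < num_divisors N \<Longrightarrow> divisors_list N ! i dvd N"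
proof -
  assume a: "N > 0" "i < num_divisors N"
  then have "divisors_list N ! i \<in> set (divisors_list N)" using dl_props(3)[OF a(1)] by simp
  then show ?thesis using dl_props(1)[OF a(1)] by simp
qed


lemma divmod_bij:
  assumes "(t::nat) > 0"
  shows "bij_betw (\<lambda>i. (i div t, i mod t)) {..<s * t} ({..<s} \<times> {..<t})"
  unfolding bij_betw_def
proof
  show "inj_on (\<lambda>i. (i div t, i mod t)) {..<s * t}"
  proof (rule inj_onI)
    fix x y assume "(x div t, x mod t) = (y div t, y mod t)"
    then have "x div t = y div t" "x mod t = y mod t" by simp_all
    note eqs = this
    have "x = x div t * t + x mod t" by simp
    also have "\<dots> = y div t * t + y mod t" using eqs by simp
    also have "\<dots> = y" by simp
    finally show "x = y" .
  qed
next
  show "(\<lambda>i. (i div t, i mod t)) ` {..<s * t} = {..<s} \<times> {..<t}"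
  proof
    show "(\<lambda>i. (i div t, i mod t)) ` {..<s * t} \<subseteq> {..<s} \<times> {..<t}"
    proof (rule image_subsetI)
      fix i assume "i \<in> {..<s * t}"
      then have "i < s * t" by simp
      then have "i div t < s" by (simp add: less_mult_imp_div_less)
      moreover have "i mod t < t" using assms by simp
      ultimately show "(i div t, i mod t) \<in> {..<s} \<times> {..<t}" by simp
    qed
    show "{..<s} \<times> {..<t} \<subseteq> (\<lambda>i. (i div t, i mod t)) ` {..<s * t}"
    proof clarify
      fix a b assume ab: "a < s" "b < t"
      have "a * t + b < a * t + t" using ab by simp
      also have "\<dots> = Suc a * t" by simp
      also have "\<dots> \<le> s * t" using ab by (intro mult_le_mono1) simp
      finally have x: "a * t + b \<in> {..<s * t}" by simp
      have "(a, b) = ((a * t + b) div t, (a * t + b) mod t)" using ab assms by simp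
      then show "(a, b) \<in> (\<lambda>i. (i div t, i mod t)) ` {..<s * t}" by (rule rev_image_eqI[OF x])
    qed
  qed
qed


lemma kron_induct:
  fixes F :: "nat \<Rightarrow> nat \<Rightarrow> nat \<Rightarrow> complex"
  assumes F1: "F 1 1 1 = 1"
    and Fm: "\<And>q m a1 a2 b1 b2. coprime q m \<Longrightarrow> q > 0 \<Longrightarrow> m > 0 \<Longrightarrow> a1 dvd q \<Longrightarrow> b1 dvd q \<Longrightarrow>
        a2 dvd m \<Longrightarrow> b2 dvd m \<Longrightarrow> F (q * m) (a1 * a2) (b1 * b2) = F q a1 b1 * F m a2 b2"
  shows "distinct ps \<Longrightarrow> \<forall>r\<in>set ps. prime r \<Longrightarrow>
    \<exists>h. bij_betw h {..<num_divisors (prod_list (map (\<lambda>r. r ^ e r) ps))} {d. d dvd prod_list (map (\<lambda>r. r ^ e r) ps)}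
      \<and> kron_list (map (Gm F) (map (\<lambda>r. r ^ e r) ps)) =
        mat (num_divisors (prod_list (map (\<lambda>r. r ^ e r) ps))) (num_divisors (prod_list (map (\<lambda>r. r ^ e r) ps)))
          (\<lambda>(i, j). F (prod_list (map (\<lambda>r. r ^ e r) ps)) (h i) (h j))"
proof (induction ps)
  case Nil
  have nd: "num_divisors 1 = 1" unfolding num_divisors_def by simp
  have F1': "F (Suc 0) (Suc 0) (Suc 0) = 1" using F1 by simp
  have l1: "{..<1::nat} = {0}" by auto
  have "bij_betw (\<lambda>_. 1::nat) {..<1::nat} {d. d dvd 1}" unfolding l1 by (simp add: bij_betw_def)
  moreover have "(1\<^sub>m 1 :: complex mat) = mat 1 1 (\<lambda>(i, j). F 1 1 1)"
    by (rule eq_matI) (auto simp: F1 F1')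
  ultimately show ?case unfolding nd by (intro exI[of _ "\<lambda>_. 1"]) (simp add: kron_list_def nd[simplified] split_def)
next
  case (Cons p ps)
  define q where "q = p ^ e p"
  define m where "m = prod_list (map (\<lambda>r. r ^ e r) ps)"
  have pp: "prime p" using Cons by simp
  have cop: "coprime q m" unfolding q_def m_def using coprime_pp_list[of p ps] Cons by simp
  have q0: "q > 0" unfolding q_def using pp prime_gt_0_nat by simp
  have m0: "m > 0" unfolding m_def using prod_pp_pos Cons by simp
  define s where "s = num_divisors q"
  define t where "t = num_divisors m"
  have t0: "t > 0" unfolding t_def using num_div_pos[OF m0] .
  obtain h where hb: "bij_betw h {..<t} {d. d dvd m}"
    and K: "kron_list (map (Gm F) (map (\<lambda>r. r ^ e r) ps)) = mat t t (\<lambda>(i, j). F m (h i) (h j))"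
    using Cons unfolding m_def t_def by auto
  have nd: "num_divisors (q * m) = s * t"
    unfolding s_def t_def num_divisors_def using card_divs_mult[OF cop q0 m0] .
  define h' where "h' i = divisors_list q ! (i div t) * h (i mod t)" for i
  have "bij_betw ((\<lambda>(d1, d2). d1 * d2) \<circ> map_prod ((!) (divisors_list q)) h \<circ> (\<lambda>i. (i div t, i mod t)))
     {..<s * t} {d. d dvd q * m}"
    unfolding s_def
    by (rule bij_betw_trans[OF divmod_bij[OF t0] bij_betw_trans[OF bij_betw_map_prod[OF dl_bij[OF q0] hb] divs_bij[OF cop]]])
  moreover have "((\<lambda>(d1, d2). d1 * d2) \<circ> map_prod ((!) (divisors_list q)) h \<circ> (\<lambda>i. (i div t, i mod t))) = h'"
    by (auto simp: h'_def)
  ultimately have hb': "bij_betw h' {..<s * t} {d. d dvd q * m}" by simp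
  have dq: "dim_row (Gm F q) = s" "dim_col (Gm F q) = s" by (simp_all add: Gm_def s_def)
  have KK: "kron (Gm F q) (mat t t (\<lambda>(i, j). F m (h i) (h j))) = mat (s * t) (s * t) (\<lambda>(i, j). F (q * m) (h' i) (h' j))"
  proof (rule eq_matI)
    fix i j assume ij: "i < dim_row (mat (s * t) (s * t) (\<lambda>(i, j). F (q * m) (h' i) (h' j)))"
      "j < dim_col (mat (s * t) (s * t) (\<lambda>(i, j). F (q * m) (h' i) (h' j)))"
    then have i: "i < s * t" and j: "j < s * t" by simp_all
    have id: "i div t < s" "j div t < s" using i j by (simp_all add: less_mult_imp_div_less)
    have im: "i mod t < t" "j mod t < t" using t0 by simp_all
    have dv: "divisors_list q ! (i div t) dvd q" "divisors_list q ! (j div t) dvd q"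
      using dl_dvd[OF q0] id unfolding s_def by auto
    have hv: "h (i mod t) dvd m" "h (j mod t) dvd m" using hb im by (auto simp: bij_betw_def)
    have "kron (Gm F q) (mat t t (\<lambda>(i, j). F m (h i) (h j))) $$ (i, j)
        = Gm F q $$ (i div t, j div t) * mat t t (\<lambda>(i, j). F m (h i) (h j)) $$ (i mod t, j mod t)"
      unfolding kron_def using i j dq by simp
    also have "\<dots> = F q (divisors_list q ! (i div t)) (divisors_list q ! (j div t)) * F m (h (i mod t)) (h (j mod t))"
      using id im unfolding Gm_def s_def by simp
    also have "\<dots> = F (q * m) (h' i) (h' j)"
      unfolding h'_def by (rule Fm[OF cop q0 m0 dv(1) dv(2) hv(1) hv(2), symmetric])
    finally show "kron (Gm F q) (mat t t (\<lambda>(i, j). F m (h i) (h j))) $$ (i, j) = mat (s * t) (s * t) (\<lambda>(i, j). F (q * m) (h' i) (h' j)) $$ (i, j)"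
      using i j by simp
  qed (simp_all add: kron_def dq)
  have "kron_list (map (Gm F) (map (\<lambda>r. r ^ e r) (p # ps))) = kron (Gm F q) (kron_list (map (Gm F) (map (\<lambda>r. r ^ e r) ps)))"
    by (simp add: kron_list_def q_def)
  also have "\<dots> = mat (s * t) (s * t) (\<lambda>(i, j). F (q * m) (h' i) (h' j))" unfolding K KK ..
  finally show ?case using hb' nd unfolding q_def m_def by (intro exI[of _ h']) simp
qed



section \<open>Permutation similarity\<close>

lemma perm_mat_carrier: "perm_mat N f \<in> carrier_mat N N"
  by (simp add: perm_mat_def)

lemma perm_left:
  assumes A: "A \<in> carrier_mat N N" and g: "g permutes {..<N}"
  shows "perm_mat N (inv_into UNIV g) * A = mat N N (\<lambda>(i, j). A $$ (g i, j))"
proof (rule eq_matI)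
  fix i j assume ij: "i < dim_row (mat N N (\<lambda>(i, j). A $$ (g i, j)))" "j < dim_col (mat N N (\<lambda>(i, j). A $$ (g i, j)))"
  then have i: "i < N" and j: "j < N" by simp_all
  have gi: "g i < N" using permutes_in_image[OF g] i by simp
  have "(perm_mat N (inv_into UNIV g) * A) $$ (i, j) = (\<Sum>k\<in>{0..<N}. (if i = inv_into UNIV g k then 1 else 0) * A $$ (k, j))"
    using A i j by (simp add: perm_mat_def scalar_prod_def)
  also have "\<dots> = (\<Sum>k\<in>{0..<N}. (if k = g i then A $$ (k, j) else 0))"
  proof (rule sum.cong[OF refl])
    fix k
    have "i = inv_into UNIV g k \<longleftrightarrow> k = g i" using permutes_inverses[OF g] by metis
    then show "(if i = inv_into UNIV g k then 1 else 0) * A $$ (k, j) = (if k = g i then A $$ (k, j) else 0)" by simp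
  qed
  also have "\<dots> = A $$ (g i, j)" using gi by simp
  finally show "(perm_mat N (inv_into UNIV g) * A) $$ (i, j) = mat N N (\<lambda>(i, j). A $$ (g i, j)) $$ (i, j)"
    using i j by simp
qed (use A in \<open>simp_all add: perm_mat_def\<close>)

lemma perm_right:
  assumes A: "A \<in> carrier_mat N N" and g: "g permutes {..<N}"
  shows "A * perm_mat N g = mat N N (\<lambda>(i, j). A $$ (i, g j))"
proof (rule eq_matI)
  fix i j assume ij: "i < dim_row (mat N N (\<lambda>(i, j). A $$ (i, g j)))" "j < dim_col (mat N N (\<lambda>(i, j). A $$ (i, g j)))"
  then have i: "i < N" and j: "j < N" by simp_all
  have gj: "g j < N" using permutes_in_image[OF g] j by simp
  have "(A * perm_mat N g) $$ (i, j) = (\<Sum>k\<in>{0..<N}. A $$ (i, k) * (if k = g j then 1 else 0))"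
    using A i j by (simp add: perm_mat_def scalar_prod_def)
  also have "\<dots> = (\<Sum>k\<in>{0..<N}. (if k = g j then A $$ (i, k) else 0))"
    by (rule sum.cong[OF refl]) simp
  also have "\<dots> = A $$ (i, g j)" using gj by simp
  finally show "(A * perm_mat N g) $$ (i, j) = mat N N (\<lambda>(i, j). A $$ (i, g j)) $$ (i, j)"
    using i j by simp
qed (use A in \<open>simp_all add: perm_mat_def\<close>)

lemma perm_sim:
  assumes A: "A \<in> carrier_mat N N" and f: "f permutes {..<N}"
  shows "perm_similar A (mat N N (\<lambda>(i, j). A $$ (f i, f j)))"
proof -
  define P where "P = (perm_mat N f :: 'a mat)"
  define Q where "Q = (perm_mat N (inv_into UNIV f) :: 'a mat)"
  have fi: "inv_into UNIV f permutes {..<N}" using permutes_inv[OF f] .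
  have P: "P \<in> carrier_mat N N" unfolding P_def by (rule perm_mat_carrier)
  have "Q * P = mat N N (\<lambda>(i, j). P $$ (f i, j))" unfolding Q_def by (rule perm_left[OF P f])
  also have "\<dots> = 1\<^sub>m N"
  proof (rule eq_matI)
    fix i j assume "i < dim_row (1\<^sub>m N :: 'a mat)" "j < dim_col (1\<^sub>m N :: 'a mat)"
    then have i: "i < N" and j: "j < N" by simp_all
    have "f i < N" using permutes_in_image[OF f] i by simp
    moreover have "f i = f j \<longleftrightarrow> i = j" using permutes_inj[OF f] by (auto dest: injD)
    ultimately show "mat N N (\<lambda>(i, j). P $$ (f i, j)) $$ (i, j) = (1\<^sub>m N :: 'a mat) $$ (i, j)"
      using i j by (simp add: P_def perm_mat_def)
  qed simp_all
  finally have QP: "Q * P = 1\<^sub>m N" .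
  have "P * Q = mat N N (\<lambda>(i, j). P $$ (i, inv_into UNIV f j))" unfolding Q_def by (rule perm_right[OF P fi])
  also have "\<dots> = 1\<^sub>m N"
  proof (rule eq_matI)
    fix i j assume "i < dim_row (1\<^sub>m N :: 'a mat)" "j < dim_col (1\<^sub>m N :: 'a mat)"
    then have i: "i < N" and j: "j < N" by simp_all
    have "inv_into UNIV f j < N" using permutes_in_image[OF fi] j by simp
    moreover have "i = f (inv_into UNIV f j) \<longleftrightarrow> i = j" using permutes_inverses(1)[OF f] by simp
    ultimately show "mat N N (\<lambda>(i, j). P $$ (i, inv_into UNIV f j)) $$ (i, j) = (1\<^sub>m N :: 'a mat) $$ (i, j)"
      using i j by (simp add: P_def perm_mat_def)
  qed simp_all
  finally have PQ: "P * Q = 1\<^sub>m N" .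
  have QA: "Q * A = mat N N (\<lambda>(i, j). A $$ (f i, j))" unfolding Q_def by (rule perm_left[OF A f])
  have QAc: "Q * A \<in> carrier_mat N N" unfolding QA by simp
  have "Q * A * P = mat N N (\<lambda>(i, j). (Q * A) $$ (i, f j))" unfolding P_def by (rule perm_right[OF QAc f])
  also have "\<dots> = mat N N (\<lambda>(i, j). A $$ (f i, f j))"
  proof (rule eq_matI)
    fix i j assume "i < dim_row (mat N N (\<lambda>(i, j). A $$ (f i, f j)))" "j < dim_col (mat N N (\<lambda>(i, j). A $$ (f i, f j)))"
    then have i: "i < N" and j: "j < N" by simp_all
    have "f j < N" using permutes_in_image[OF f] j by simp
    then show "mat N N (\<lambda>(i, j). (Q * A) $$ (i, f j)) $$ (i, j) = mat N N (\<lambda>(i, j). A $$ (f i, f j)) $$ (i, j)"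
      using i j by (simp add: QA)
  qed simp_all
  finally have QAP: "mat N N (\<lambda>(i, j). A $$ (f i, f j)) = Q * A * P" by simp
  show ?thesis unfolding perm_similar_def
    using A f QP PQ QAP unfolding P_def Q_def
    by (intro exI[of _ N] exI[of _ f] exI[of _ "perm_mat N (inv_into UNIV f)"]) (simp add: perm_mat_def)
qed

lemma sim_from:
  assumes n0: "n > 0" and hb: "bij_betw h {..<num_divisors n} {d. d dvd n}"
  shows "perm_similar (Gm F n) (mat (num_divisors n) (num_divisors n) (\<lambda>(i, j). F n (h i) (h j)))"
proof -
  define N where "N = num_divisors n"
  define \<phi> where "\<phi> = (!) (divisors_list n)"
  have pb: "bij_betw \<phi> {..<N} {d. d dvd n}" unfolding \<phi>_def N_def by (rule dl_bij[OF n0])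
  define f where "f i = (if i < N then inv_into {..<N} \<phi> (h i) else i)" for i
  have hb': "bij_betw h {..<N} {d. d dvd n}" using hb unfolding N_def .
  have b1: "bij_betw (inv_into {..<N} \<phi> \<circ> h) {..<N} {..<N}"
    by (rule bij_betw_trans[OF hb' bij_betw_inv_into[OF pb]])
  have b2: "bij_betw f {..<N} {..<N}"
    by (rule bij_betw_cong[THEN iffD1, OF _ b1]) (simp add: f_def)
  have fp: "f permutes {..<N}" by (rule bij_imp_permutes[OF b2]) (simp add: f_def)
  have phif: "\<phi> (f i) = h i" if "i < N" for i
  proof -
    have "h i \<in> \<phi> ` {..<N}" using hb' pb that by (auto simp: bij_betw_def)
    then show ?thesis using that by (simp add: f_def f_inv_into_f)
  qed
  have fN: "f i < N" if "i < N" for i using permutes_in_image[OF fp] that by simp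
  have A: "Gm F n \<in> carrier_mat N N" by (simp add: Gm_def N_def)
  have "mat N N (\<lambda>(i, j). F n (h i) (h j)) = mat N N (\<lambda>(i, j). Gm F n $$ (f i, f j))"
  proof (rule eq_matI)
    fix i j assume "i < dim_row (mat N N (\<lambda>(i, j). Gm F n $$ (f i, f j)))" "j < dim_col (mat N N (\<lambda>(i, j). Gm F n $$ (f i, f j)))"
    then have i: "i < N" and j: "j < N" by simp_all
    show "mat N N (\<lambda>(i, j). F n (h i) (h j)) $$ (i, j) = mat N N (\<lambda>(i, j). Gm F n $$ (f i, f j)) $$ (i, j)"
      using i j fN[OF i] fN[OF j] phif[OF i] phif[OF j] by (simp add: Gm_def N_def \<phi>_def)
  qed simp_all
  then show ?thesis using perm_sim[OF A fp] unfolding N_def by simp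
qed



definition FS :: "nat \<Rightarrow> nat \<Rightarrow> nat \<Rightarrow> complex" where
  "FS N a b = ramanujan_sum a (int (N div b))"

definition FU :: "nat \<Rightarrow> nat \<Rightarrow> nat \<Rightarrow> complex" where
  "FU N a b = complex_of_real (1 / sqrt (real N)) * ramanujan_sum a (int (N div b))
        * complex_of_real (sqrt (real (totient b) / real (totient a)))"

lemma S_Gm: "S_mat = Gm FS"
  by (rule ext) (simp add: S_mat_def Gm_def FS_def)

lemma U_Gm: "U_mat = Gm FU"
  by (rule ext) (simp add: U_mat_def Gm_def FU_def)

lemma FS_mult:
  "coprime q m \<Longrightarrow> q > 0 \<Longrightarrow> m > 0 \<Longrightarrow> a1 dvd q \<Longrightarrow> b1 dvd q \<Longrightarrow> a2 dvd m \<Longrightarrow> b2 dvd m \<Longrightarrow>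
    FS (q * m) (a1 * a2) (b1 * b2) = FS q a1 b1 * FS m a2 b2"
  unfolding FS_def by (rule ram_entry_mult)

lemma FU_mult:
  assumes cop: "coprime q m" and q0: "q > 0" and m0: "m > 0" and d: "a1 dvd q" "b1 dvd q" "a2 dvd m" "b2 dvd m"
  shows "FU (q * m) (a1 * a2) (b1 * b2) = FU q a1 b1 * FU m a2 b2"
proof -
  have ca: "coprime a1 a2" using coprime_divisors[OF d(1) d(3) cop] .
  have cb: "coprime b1 b2" using coprime_divisors[OF d(2) d(4) cop] .
  have r1: "1 / sqrt (real (q * m)) = 1 / sqrt (real q) * (1 / sqrt (real m))"
    by (simp add: real_sqrt_mult)
  have r2: "sqrt (real (totient (b1 * b2)) / real (totient (a1 * a2)))
      = sqrt (real (totient b1) / real (totient a1)) * sqrt (real (totient b2) / real (totient a2))"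
    unfolding totient_mult_coprime[OF ca] totient_mult_coprime[OF cb] of_nat_mult
    by (simp add: real_sqrt_mult[symmetric] times_divide_times_eq)
  show ?thesis
    unfolding FU_def r1 r2 ram_entry_mult[OF cop q0 m0 d] of_real_mult by (simp add: mult_ac)
qed

lemma FS1: "FS 1 1 1 = 1" by (simp add: FS_def)
lemma FU1: "FU 1 1 1 = 1" by (simp add: FU_def)

lemma n_decomp:
  fixes n :: nat
  assumes "n > 0"
  shows "prod_list (map (\<lambda>r. r ^ multiplicity r n) (sorted_list_of_set (prime_factors n))) = n"
    "distinct (sorted_list_of_set (prime_factors n))"
    "\<forall>r\<in>set (sorted_list_of_set (prime_factors n)). prime r"
proof -
  have fin: "finite (prime_factors n)" by simp
  show "prod_list (map (\<lambda>r. r ^ multiplicity r n) (sorted_list_of_set (prime_factors n))) = n"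
    using prod.distinct_set_conv_list[OF distinct_sorted_list_of_set[of "prime_factors n"], of "\<lambda>r. r ^ multiplicity r n"]
      fin prime_factorization_nat[OF assms] by simp
  show "distinct (sorted_list_of_set (prime_factors n))" by simp
  show "\<forall>r\<in>set (sorted_list_of_set (prime_factors n)). prime r" using fin by auto
qed

lemma pp_factors: "prime_power_factors n = map (\<lambda>r. r ^ multiplicity r n) (sorted_list_of_set (prime_factors n))"
  by (simp add: prime_power_factors_def)

lemma sim_main:
  fixes n :: nat
  assumes n0: "n > 0" and F1: "F 1 1 1 = 1"
    and Fm: "\<And>q m a1 a2 b1 b2. coprime q m \<Longrightarrow> q > 0 \<Longrightarrow> m > 0 \<Longrightarrow> a1 dvd q \<Longrightarrow> b1 dvd q \<Longrightarrow>
        a2 dvd m \<Longrightarrow> b2 dvd m \<Longrightarrow> F (q * m) (a1 * a2) (b1 * b2) = F q a1 b1 * F m a2 b2"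
  shows "perm_similar (Gm F n) (kron_list (map (Gm F) (prime_power_factors n)))"
proof -
  obtain h where hb: "bij_betw h {..<num_divisors n} {d. d dvd n}"
    and K: "kron_list (map (Gm F) (prime_power_factors n)) = mat (num_divisors n) (num_divisors n) (\<lambda>(i, j). F n (h i) (h j))"
    using kron_induct[of F, OF F1 Fm, OF _ _ _ _ _ _ _ n_decomp(2,3)[OF n0], of "\<lambda>r. multiplicity r n"]
    unfolding n_decomp(1)[OF n0] pp_factors by blast
  show ?thesis unfolding K by (rule sim_from[OF n0 hb])
qed

lemma dvd_pp_cases:
  assumes "prime (p::nat)" "a dvd p ^ k" obtains i where "i \<le> k" "a = p ^ i"
  using divides_primepow_nat[OF assms(1)] assms(2) by blast

lemma S_identity:
  fixes n :: nat
  assumes n0: "n > 0" and a: "a dvd n" and b: "b dvd n"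
  shows "(\<Sum>d | d dvd n. FS n a d * FS n d b) = (if a = b then of_nat n else 0)"
proof -
  let ?ps = "sorted_list_of_set (prime_factors n)"
  let ?e = "\<lambda>r. multiplicity r n"
  define P where "P q a b \<longleftrightarrow> (\<Sum>d | d dvd q. FS q a d * FS q d b) = (if a = b then of_nat q else 0)" for q a b
  have "P (prod_list (map (\<lambda>r. r ^ ?e r) ?ps)) a b"
  proof (rule mult_induct[OF n_decomp(2,3)[OF n0]])
    fix p k a b :: nat assume p: "prime p" and ab: "a dvd p ^ k" "b dvd p ^ k"
    obtain i where i: "i \<le> k" "a = p ^ i" using dvd_pp_cases[OF p ab(1)] by blast
    obtain j where j: "j \<le> k" "b = p ^ j" using dvd_pp_cases[OF p ab(2)] by blast
    show "P (p ^ k) a b" unfolding P_def FS_def i(2) j(2) by (rule P1_pp[OF p i(1) j(1)])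
  next
    have "{d. d dvd (1::nat)} = {1}" by auto
    then show "P 1 1 1" unfolding P_def by (simp add: FS_def)
  next
    fix q m a1 a2 b1 b2 assume cop: "coprime q m" and q0: "q > 0" and m0: "m > 0"
      and d: "a1 dvd q" "b1 dvd q" "a2 dvd m" "b2 dvd m" and P1: "P q a1 b1" and P2: "P m a2 b2"
    have inj: "a1 * a2 = b1 * b2 \<longleftrightarrow> a1 = b1 \<and> a2 = b2"
      using inj_onD[OF bij_betw_imp_inj_on[OF divs_bij[OF cop]], of "(a1, a2)" "(b1, b2)"] d by auto
    have "(\<Sum>d | d dvd q * m. FS (q * m) (a1 * a2) d * FS (q * m) d (b1 * b2))
        = (\<Sum>d1 | d1 dvd q. \<Sum>d2 | d2 dvd m. FS (q * m) (a1 * a2) (d1 * d2) * FS (q * m) (d1 * d2) (b1 * b2))"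
      by (rule sum_divs_mult[OF cop q0 m0])
    also have "\<dots> = (\<Sum>d1 | d1 dvd q. \<Sum>d2 | d2 dvd m. (FS q a1 d1 * FS q d1 b1) * (FS m a2 d2 * FS m d2 b2))"
    proof (rule sum.cong[OF refl])
      fix d1 assume d1: "d1 \<in> {d1. d1 dvd q}"
      show "(\<Sum>d2 | d2 dvd m. FS (q * m) (a1 * a2) (d1 * d2) * FS (q * m) (d1 * d2) (b1 * b2))
          = (\<Sum>d2 | d2 dvd m. (FS q a1 d1 * FS q d1 b1) * (FS m a2 d2 * FS m d2 b2))"
      proof (rule sum.cong[OF refl])
        fix d2 assume d2: "d2 \<in> {d2. d2 dvd m}"
        show "FS (q * m) (a1 * a2) (d1 * d2) * FS (q * m) (d1 * d2) (b1 * b2)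
          = (FS q a1 d1 * FS q d1 b1) * (FS m a2 d2 * FS m d2 b2)"
          unfolding FS_mult[OF cop q0 m0 d(1) d1[simplified] d(3) d2[simplified]]
            FS_mult[OF cop q0 m0 d1[simplified] d(2) d2[simplified] d(4)]
          by (simp add: mult_ac)
      qed
    qed
    also have "\<dots> = (\<Sum>d1 | d1 dvd q. FS q a1 d1 * FS q d1 b1) * (\<Sum>d2 | d2 dvd m. FS m a2 d2 * FS m d2 b2)"
      by (simp add: sum_product)
    also have "\<dots> = (if a1 * a2 = b1 * b2 then of_nat (q * m) else 0)"
      using P1 P2 unfolding P_def inj by simp
    finally show "P (q * m) (a1 * a2) (b1 * b2)" unfolding P_def .
  qed (use a b n_decomp(1)[OF n0] in simp_all)
  then show ?thesis unfolding P_def n_decomp(1)[OF n0] .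
qed

lemma S_sym_identity:
  fixes n :: nat
  assumes n0: "n > 0" and a: "a dvd n" and b: "b dvd n"
  shows "FS n a b * of_nat (totient b) = FS n b a * of_nat (totient a)"
proof -
  let ?ps = "sorted_list_of_set (prime_factors n)"
  let ?e = "\<lambda>r. multiplicity r n"
  define P where "P q a b \<longleftrightarrow> FS q a b * of_nat (totient b) = FS q b a * of_nat (totient a)" for q a b
  have "P (prod_list (map (\<lambda>r. r ^ ?e r) ?ps)) a b"
  proof (rule mult_induct[OF n_decomp(2,3)[OF n0]])
    fix p k a b :: nat assume p: "prime p" and ab: "a dvd p ^ k" "b dvd p ^ k"
    obtain i where i: "i \<le> k" "a = p ^ i" using dvd_pp_cases[OF p ab(1)] by blast
    obtain j where j: "j \<le> k" "b = p ^ j" using dvd_pp_cases[OF p ab(2)] by blast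
    show "P (p ^ k) a b" unfolding P_def FS_def i(2) j(2) by (rule P2_pp[OF p i(1) j(1)])
  next
    show "P 1 1 1" unfolding P_def by simp
  next
    fix q m a1 a2 b1 b2 assume cop: "coprime q m" and q0: "q > 0" and m0: "m > 0"
      and d: "a1 dvd q" "b1 dvd q" "a2 dvd m" "b2 dvd m" and P1: "P q a1 b1" and P2: "P m a2 b2"
    have ca: "coprime a1 a2" using coprime_divisors[OF d(1) d(3) cop] .
    have cb: "coprime b1 b2" using coprime_divisors[OF d(2) d(4) cop] .
    have "FS (q * m) (a1 * a2) (b1 * b2) * of_nat (totient (b1 * b2))
        = (FS q a1 b1 * of_nat (totient b1)) * (FS m a2 b2 * of_nat (totient b2))"
      unfolding FS_mult[OF cop q0 m0 d] totient_mult_coprime[OF cb] of_nat_mult by (simp add: mult_ac)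
    also have "\<dots> = (FS q b1 a1 * of_nat (totient a1)) * (FS m b2 a2 * of_nat (totient a2))"
      using P1 P2 unfolding P_def by simp
    also have "\<dots> = FS (q * m) (b1 * b2) (a1 * a2) * of_nat (totient (a1 * a2))"
      unfolding FS_mult[OF cop q0 m0 d(2) d(1) d(4) d(3)] totient_mult_coprime[OF ca] of_nat_mult by (simp add: mult_ac)
    finally show "P (q * m) (a1 * a2) (b1 * b2)" unfolding P_def .
  qed (use a b n_decomp(1)[OF n0] in simp_all)
  then show ?thesis unfolding P_def n_decomp(1)[OF n0] .
qed



lemma Gm_entry: "i < num_divisors n \<Longrightarrow> j < num_divisors n \<Longrightarrow>
   Gm F n $$ (i, j) = F n (divisors_list n ! i) (divisors_list n ! j)"
  by (simp add: Gm_def)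

lemma Gm_mult_entry:
  assumes n0: "n > 0" and i: "i < num_divisors n" and j: "j < num_divisors n"
  shows "(Gm F n * Gm G n) $$ (i, j) = (\<Sum>d | d dvd n. F n (divisors_list n ! i) d * G n d (divisors_list n ! j))"
proof -
  have "(Gm F n * Gm G n) $$ (i, j) = (\<Sum>k\<in>{0..<num_divisors n}. F n (divisors_list n ! i) (divisors_list n ! k) * G n (divisors_list n ! k) (divisors_list n ! j))"
    using i j by (simp add: Gm_def scalar_prod_def)
  also have "\<dots> = (\<Sum>k\<in>{..<num_divisors n}. (\<lambda>d. F n (divisors_list n ! i) d * G n d (divisors_list n ! j)) (divisors_list n ! k))"
    by (simp add: lessThan_atLeast0)
  also have "\<dots> = (\<Sum>d | d dvd n. F n (divisors_list n ! i) d * G n d (divisors_list n ! j))"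
    by (rule sum.reindex_bij_betw[OF dl_bij[OF n0]])
  finally show ?thesis .
qed

lemma dl_pos: "n > 0 \<Longrightarrow> i < num_divisors n \<Longrightarrow> divisors_list n ! i > 0"
  using dl_dvd[of n i] by (metis dvd_0_left_iff gr0I not_gr0)

lemma dl_inj: "n > 0 \<Longrightarrow> i < num_divisors n \<Longrightarrow> j < num_divisors n \<Longrightarrow>
    divisors_list n ! i = divisors_list n ! j \<longleftrightarrow> i = j"
  using dl_props[of n] nth_eq_iff_index_eq[of "divisors_list n" i j] by simp

lemma sqrt_tot: assumes "(A::real) > 0" "B > 0" "D > 0"
  shows "sqrt (D / A) * sqrt (B / D) = sqrt (B / A)"
  using assms by (simp add: real_sqrt_divide)

lemma sqrt_tot2: "(A::real) > 0 \<Longrightarrow> B > 0 \<Longrightarrow> B / A * sqrt (A / B) = sqrt (B / A)"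
  by (smt (verit, ccfv_SIG) divide_eq_0_iff frac_eq_eq
    nonzero_mult_div_cancel_left real_div_sqrt real_sqrt_divide
    times_divide_eq_right zero_less_divide_iff)

lemma FU_prod:
  assumes n0: "n > 0" and a0: "a > 0" and b0: "b > 0" and d0: "d > 0"
  shows "FU n a d * FU n d b = complex_of_real (1 / real n * sqrt (real (totient b) / real (totient a))) * (FS n a d * FS n d b)"
proof -
  define s where "s = 1 / sqrt (real n)"
  have s2: "s * s = 1 / real n" unfolding s_def using n0 by simp
  have r: "sqrt (real (totient d) / real (totient a)) * sqrt (real (totient b) / real (totient d))
      = sqrt (real (totient b) / real (totient a))"
    by (rule sqrt_tot) (use a0 b0 d0 in simp_all)
  have "FU n a d * FU n d b = complex_of_real (s * s) * complex_of_real (sqrt (real (totient d) / real (totient a)) * sqrt (real (totient b) / real (totient d)))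
        * (FS n a d * FS n d b)"
    unfolding FU_def FS_def s_def of_real_mult by (simp add: mult_ac)
  then show ?thesis unfolding s2 r by (simp add: of_real_mult mult_ac)
qed

lemma FU_sym:
  assumes n0: "n > 0" and a: "a dvd n" and b: "b dvd n"
  shows "FU n b a = FU n a b"
proof -
  have a0: "a > 0" and b0: "b > 0" using a b n0 by (auto intro!: gr0I)
  define A where "A = real (totient a)"
  define B where "B = real (totient b)"
  have A0: "A > 0" and B0: "B > 0" unfolding A_def B_def using a0 b0 by simp_all
  have idt: "FS n a b * of_real B = FS n b a * of_real A"
    using S_sym_identity[OF n0 a b] unfolding A_def B_def by simp
  have "FS n b a = FS n b a * of_real A / of_real A" using A0 by simp
  also have "\<dots> = FS n a b * of_real B / of_real A" using idt by simp
  finally have e: "FS n b a = FS n a b * of_real (B / A)" by (simp add: of_real_divide)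
  have "FU n b a = complex_of_real (1 / sqrt (real n)) * FS n b a * complex_of_real (sqrt (A / B))"
    unfolding FU_def FS_def A_def B_def ..
  also have "\<dots> = complex_of_real (1 / sqrt (real n)) * FS n a b * complex_of_real (B / A * sqrt (A / B))"
    unfolding e of_real_mult by (simp add: mult_ac)
  also have "\<dots> = FU n a b" by (simp only: sqrt_tot2[OF A0 B0]) (simp add: FU_def FS_def A_def B_def)
  finally show ?thesis .
qed

theorem mainTheorem1:
  fixes n :: nat
  assumes "n \<ge> 1"
  shows "perm_similar (S_mat n) (kron_list (map S_mat (prime_power_factors n)))
       \<and> perm_similar (U_mat n) (kron_list (map U_mat (prime_power_factors n)))
       \<and> (\<forall>i < num_divisors n. \<forall>j < num_divisors n. U_mat n $$ (i, j) \<in> \<real>)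
       \<and> mat_adjoint (U_mat n) = U_mat n
       \<and> U_mat n * U_mat n = 1\<^sub>m (num_divisors n)
       \<and> S_mat n * S_mat n = of_nat n \<cdot>\<^sub>m 1\<^sub>m (num_divisors n)"
proof -
  have n0: "n > 0" using assms by simp
  let ?N = "num_divisors n"
  let ?D = "divisors_list n"
  have P1: "perm_similar (S_mat n) (kron_list (map S_mat (prime_power_factors n)))"
    unfolding S_Gm by (rule sim_main[of n FS, OF n0 FS1], rule FS_mult, assumption+)
  have P2: "perm_similar (U_mat n) (kron_list (map U_mat (prime_power_factors n)))"
    unfolding U_Gm by (rule sim_main[of n FU, OF n0 FU1], rule FU_mult, assumption+)
  have R: "\<forall>i < ?N. \<forall>j < ?N. U_mat n $$ (i, j) \<in> \<real>"
  proof (intro allI impI)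
    fix i j assume i: "i < ?N" and j: "j < ?N"
    have "ramanujan_sum (?D ! i) (int (n div ?D ! j)) \<in> \<real>" by (rule ram_real[OF dl_pos[OF n0 i]])
    then show "U_mat n $$ (i, j) \<in> \<real>"
      unfolding U_Gm Gm_entry[OF i j] FU_def by (intro Reals_mult) auto
  qed
  have sym: "U_mat n $$ (j, i) = U_mat n $$ (i, j)" if i: "i < ?N" and j: "j < ?N" for i j
    unfolding U_Gm Gm_entry[OF i j] Gm_entry[OF j i] by (rule FU_sym[OF n0 dl_dvd[OF n0 i] dl_dvd[OF n0 j]])
  have Ucar: "U_mat n \<in> carrier_mat ?N ?N" by (simp add: U_mat_def)
  have ADJ: "mat_adjoint (U_mat n) = U_mat n"
  proof (rule eq_matI)
    fix i j assume "i < dim_row (U_mat n)" "j < dim_col (U_mat n)"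
    then have i: "i < ?N" and j: "j < ?N" using Ucar by auto
    have "mat_adjoint (U_mat n) $$ (i, j) = cnj (U_mat n $$ (j, i))"
      unfolding mat_adjoint_def using i j Ucar
      by (simp add: mat_of_rows_index cols_nth vec_index_conjugate conjugate_complex_def)
    also have "\<dots> = U_mat n $$ (j, i)" using R i j by (simp add: Reals_cnj_iff)
    also have "\<dots> = U_mat n $$ (i, j)" by (rule sym[OF i j])
    finally show "mat_adjoint (U_mat n) $$ (i, j) = U_mat n $$ (i, j)" .
  qed (use Ucar in \<open>simp_all add: mat_adjoint_def\<close>)
  have UU: "U_mat n * U_mat n = 1\<^sub>m ?N"
  proof (rule eq_matI)
    fix i j assume "i < dim_row (1\<^sub>m ?N :: complex mat)" "j < dim_col (1\<^sub>m ?N :: complex mat)"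
    then have i: "i < ?N" and j: "j < ?N" by auto
    have ai: "?D ! i > 0" and aj: "?D ! j > 0" using dl_pos[OF n0] i j by auto
    have "(U_mat n * U_mat n) $$ (i, j) = (\<Sum>d | d dvd n. FU n (?D ! i) d * FU n d (?D ! j))"
      unfolding U_Gm by (rule Gm_mult_entry[OF n0 i j])
    also have "\<dots> = (\<Sum>d | d dvd n. complex_of_real (1 / real n * sqrt (real (totient (?D ! j)) / real (totient (?D ! i))))
          * (FS n (?D ! i) d * FS n d (?D ! j)))"
    proof (rule sum.cong[OF refl])
      fix d assume "d \<in> {d. d dvd n}"
      then have "d > 0" using n0 by (auto intro!: gr0I)
      then show "FU n (?D ! i) d * FU n d (?D ! j) = complex_of_real (1 / real n * sqrt (real (totient (?D ! j)) / real (totient (?D ! i))))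
          * (FS n (?D ! i) d * FS n d (?D ! j))" by (rule FU_prod[OF n0 ai aj])
    qed
    also have "\<dots> = complex_of_real (1 / real n * sqrt (real (totient (?D ! j)) / real (totient (?D ! i))))
          * (if ?D ! i = ?D ! j then of_nat n else 0)"
      unfolding sum_distrib_left[symmetric] S_identity[OF n0 dl_dvd[OF n0 i] dl_dvd[OF n0 j]] ..
    also have "\<dots> = (if i = j then 1 else 0)"
      using dl_inj[OF n0 i j] n0 ai by (auto simp: of_real_mult)
    also have "\<dots> = (1\<^sub>m ?N :: complex mat) $$ (i, j)" using i j by simp
    finally show "(U_mat n * U_mat n) $$ (i, j) = (1\<^sub>m ?N :: complex mat) $$ (i, j)" .
  qed (simp_all add: U_mat_def)
  have SS: "S_mat n * S_mat n = of_nat n \<cdot>\<^sub>m 1\<^sub>m ?N"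
  proof (rule eq_matI)
    fix i j assume "i < dim_row (of_nat n \<cdot>\<^sub>m 1\<^sub>m ?N :: complex mat)" "j < dim_col (of_nat n \<cdot>\<^sub>m 1\<^sub>m ?N :: complex mat)"
    then have i: "i < ?N" and j: "j < ?N" by auto
    have "(S_mat n * S_mat n) $$ (i, j) = (\<Sum>d | d dvd n. FS n (?D ! i) d * FS n d (?D ! j))"
      unfolding S_Gm by (rule Gm_mult_entry[OF n0 i j])
    also have "\<dots> = (if ?D ! i = ?D ! j then of_nat n else 0)"
      by (rule S_identity[OF n0 dl_dvd[OF n0 i] dl_dvd[OF n0 j]])
    also have "\<dots> = (of_nat n \<cdot>\<^sub>m 1\<^sub>m ?N :: complex mat) $$ (i, j)" using i j dl_inj[OF n0 i j] by simp
    finally show "(S_mat n * S_mat n) $$ (i, j) = (of_nat n \<cdot>\<^sub>m 1\<^sub>m ?N :: complex mat) $$ (i, j)" .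
  qed (simp_all add: S_mat_def)
  show ?thesis using P1 P2 R ADJ UU SS by blast
qed

end
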